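(* Let $G$ be an interval graph. If $G$ contains the forbidden pattern $\mathtt{F}$ as an induced subgraph (an induced path $P$ on $k$ vertices whose open neighbourhood contains an independent set of at least $k+3$ vertices), then $G$ is not an exactly hittable interval graph.
   Context: An interval graph is the intersection graph of a finite family of intervals on a line. An interval family (interval hypergraph) is exactly hittable if there is a set $S$ of points with $|S\cap I|=1$ for every interval $I$ of the family. An exactly hittable interval graph is an interval graph having an interval representation that is exactly hittable. The open neighbourhood of a path $P$ is the set of vertices not on $P$ adjacent to some vertex of $P$. *)

theory Defs
  imports Complex_Main
begin

definition simple_graph :: "'a set \<Rightarrow> ('a \<Rightarrow> 'a \<Rightarrow> bool) \<Rightarrow> bool" where
  "simple_graph V E \<longleftrightarrow> finite V \<and> (\<forall>u v. E u v \<longrightarrow> u \<in> V \<and> v \<in> V)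
     \<and> (\<forall>u v. E u v \<longrightarrow> E v u) \<and> (\<forall>v. \<not> E v v)"

definition interval_rep :: "'a set \<Rightarrow> ('a \<Rightarrow> 'a \<Rightarrow> bool) \<Rightarrow> ('a \<Rightarrow> real set) \<Rightarrow> bool" where
  "interval_rep V E I \<longleftrightarrow> (\<forall>v\<in>V. \<exists>a b. a \<le> b \<and> I v = {a..b})
     \<and> (\<forall>u\<in>V. \<forall>v\<in>V. u \<noteq> v \<longrightarrow> (E u v \<longleftrightarrow> I u \<inter> I v \<noteq> {}))"

definition interval_graph :: "'a set \<Rightarrow> ('a \<Rightarrow> 'a \<Rightarrow> bool) \<Rightarrow> bool" where
  "interval_graph V E \<longleftrightarrow> (\<exists>I. interval_rep V E I)"

definition exactly_hittable :: "real set set \<Rightarrow> bool" where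
  "exactly_hittable F \<longleftrightarrow> (\<exists>S. \<forall>J\<in>F. card (S \<inter> J) = 1)"

definition exactly_hittable_interval_graph :: "'a set \<Rightarrow> ('a \<Rightarrow> 'a \<Rightarrow> bool) \<Rightarrow> bool" where
  "exactly_hittable_interval_graph V E \<longleftrightarrow>
     (\<exists>I. interval_rep V E I \<and> exactly_hittable (I ` V))"

definition induced_path :: "'a set \<Rightarrow> ('a \<Rightarrow> 'a \<Rightarrow> bool) \<Rightarrow> 'a list \<Rightarrow> bool" where
  "induced_path V E P \<longleftrightarrow> P \<noteq> [] \<and> distinct P \<and> set P \<subseteq> V
     \<and> (\<forall>i<length P. \<forall>j<length P. E (P ! i) (P ! j) \<longleftrightarrow> (i + 1 = j \<or> j + 1 = i))"

definition open_nbhd :: "'a set \<Rightarrow> ('a \<Rightarrow> 'a \<Rightarrow> bool) \<Rightarrow> 'a set \<Rightarrow> 'a set" where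
  "open_nbhd V E A = {v \<in> V. v \<notin> A \<and> (\<exists>u\<in>A. E u v)}"

definition independent :: "('a \<Rightarrow> 'a \<Rightarrow> bool) \<Rightarrow> 'a set \<Rightarrow> bool" where
  "independent E S \<longleftrightarrow> (\<forall>u\<in>S. \<forall>v\<in>S. \<not> E u v)"

end

theory Submission
  imports Defs
begin

lemma cover_up:
  fixes a b :: "nat \<Rightarrow> real"
  assumes cons: "\<And>i. Suc i < n \<Longrightarrow> a (Suc i) \<le> b i \<and> a i \<le> b (Suc i)"
  shows "j \<le> k \<Longrightarrow> k < n \<Longrightarrow> a j \<le> x \<Longrightarrow> x \<le> b k \<Longrightarrow> \<exists>i<n. a i \<le> x \<and> x \<le> b i"
proof (induction k)
  case 0
  then show ?case by auto
next
  case (Suc k)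
  show ?case
  proof (cases "a (Suc k) \<le> x")
    case True
    then show ?thesis using Suc.prems by auto
  next
    case False
    show ?thesis
    proof (cases "j = Suc k")
      case True
      then show ?thesis using Suc.prems False by auto
    next
      case False2: False
      have "x \<le> b k" using False cons[of k] Suc.prems by auto
      then show ?thesis using Suc.IH Suc.prems False2 by auto
    qed
  qed
qed

lemma cover_down:
  fixes a b :: "nat \<Rightarrow> real"
  assumes cons: "\<And>i. Suc i < n \<Longrightarrow> a (Suc i) \<le> b i \<and> a i \<le> b (Suc i)"
  shows "k \<le> j \<Longrightarrow> j < n \<Longrightarrow> a j \<le> x \<Longrightarrow> x \<le> b k \<Longrightarrow> \<exists>i<n. a i \<le> x \<and> x \<le> b i"
proof (induction j)
  case 0
  then show ?case by auto
next
  case (Suc j)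
  show ?case
  proof (cases "x \<le> b (Suc j)")
    case True
    then show ?thesis using Suc.prems by auto
  next
    case False
    show ?thesis
    proof (cases "k = Suc j")
      case True
      then show ?thesis using Suc.prems False by auto
    next
      case False2: False
      have "a j \<le> x" using False cons[of j] Suc.prems by auto
      then show ?thesis using Suc.IH Suc.prems False2 by auto
    qed
  qed
qed

lemma cover:
  fixes a b :: "nat \<Rightarrow> real"
  assumes cons: "\<And>i. Suc i < n \<Longrightarrow> a (Suc i) \<le> b i \<and> a i \<le> b (Suc i)"
    and "j < n" "k < n" "a j \<le> x" "x \<le> b k"
  shows "\<exists>i<n. a i \<le> x \<and> x \<le> b i"
proof (cases "j \<le> k")
  case True
  then show ?thesis using cover_up[of n a b, OF cons, of j k x] assms by blast
next
  case False
  then show ?thesis using cover_down[of n a b, OF cons, of k j x] assms by auto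
qed

theorem lemma13:
  fixes V :: "'a set" and E :: "'a \<Rightarrow> 'a \<Rightarrow> bool" and P :: "'a list" and S :: "'a set"
  assumes "simple_graph V E"
    and "interval_graph V E"
    and "induced_path V E P"
    and "S \<subseteq> open_nbhd V E (set P)"
    and "independent E S"
    and "card S \<ge> length P + 3"
  shows "\<not> exactly_hittable_interval_graph V E"
proof
  assume "exactly_hittable_interval_graph V E"
  then obtain I where rep: "interval_rep V E I" and eh: "exactly_hittable (I ` V)"
    unfolding exactly_hittable_interval_graph_def by blast
  from eh obtain H where H: "\<forall>J\<in>I ` V. card (H \<inter> J) = 1"
    unfolding exactly_hittable_def by blast
  have "\<forall>v\<in>V. \<exists>x. H \<inter> I v = {x}" using H by (auto simp: card_1_singleton_iff)
  then obtain h where h: "\<And>v. v \<in> V \<Longrightarrow> H \<inter> I v = {h v}" by metis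
  have "\<forall>v\<in>V. \<exists>a b. a \<le> b \<and> I v = {a..b}" using rep unfolding interval_rep_def by blast
  then obtain A B where AB: "\<And>v. v \<in> V \<Longrightarrow> A v \<le> B v \<and> I v = {A v..B v}" by metis
  have adj: "\<And>u v. u \<in> V \<Longrightarrow> v \<in> V \<Longrightarrow> u \<noteq> v \<Longrightarrow> E u v \<longleftrightarrow> I u \<inter> I v \<noteq> {}"
    using rep unfolding interval_rep_def by blast
  have finV: "finite V" using assms(1) unfolding simple_graph_def by blast
  have ip: "P \<noteq> []" "distinct P" "set P \<subseteq> V"
    "\<And>i j. i < length P \<Longrightarrow> j < length P \<Longrightarrow> E (P ! i) (P ! j) \<longleftrightarrow> (i + 1 = j \<or> j + 1 = i)"
    using assms(3) unfolding induced_path_def by auto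
  have SV: "S \<subseteq> V" and Snot: "\<And>s. s \<in> S \<Longrightarrow> s \<notin> set P"
    and Sadj: "\<And>s. s \<in> S \<Longrightarrow> \<exists>p\<in>set P. E p s"
    using assms(4) unfolding open_nbhd_def by auto
  have finS: "finite S" using SV finV finite_subset by blast
  have disj: "\<And>s t. s \<in> S \<Longrightarrow> t \<in> S \<Longrightarrow> s \<noteq> t \<Longrightarrow> I s \<inter> I t = {}"
    using adj SV assms(5) unfolding independent_def by blast
  have hin: "\<And>v. v \<in> V \<Longrightarrow> h v \<in> I v \<and> h v \<in> H" using h by blast
  define n where "n = length P"
  define a where "a = (\<lambda>i. A (P ! i))"
  define b where "b = (\<lambda>i. B (P ! i))"
  have PiV: "\<And>i. i < n \<Longrightarrow> P ! i \<in> V" using ip(3) n_def by auto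
  have cons: "\<And>i. Suc i < n \<Longrightarrow> a (Suc i) \<le> b i \<and> a i \<le> b (Suc i)"
  proof -
    fix i assume i: "Suc i < n"
    have "E (P ! i) (P ! Suc i)" using ip(4)[of i "Suc i"] i n_def by auto
    moreover have "P ! i \<noteq> P ! Suc i" using ip(2) i n_def nth_eq_iff_index_eq by fastforce
    ultimately have "I (P ! i) \<inter> I (P ! Suc i) \<noteq> {}" using adj PiV i by auto
    then show "a (Suc i) \<le> b i \<and> a i \<le> b (Suc i)"
      using AB[OF PiV[of i]] AB[OF PiV[of "Suc i"]] i unfolding a_def b_def by auto
  qed
  define L where "L = Min (A ` set P)"
  define R where "R = Max (B ` set P)"
  have LP: "\<And>p. p \<in> set P \<Longrightarrow> L \<le> A p" unfolding L_def by simp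
  have RP: "\<And>p. p \<in> set P \<Longrightarrow> B p \<le> R" unfolding R_def by simp
  have "L \<in> A ` set P" unfolding L_def using ip(1) by simp
  then obtain j where j: "j < n" "a j = L" unfolding a_def n_def by (auto simp: in_set_conv_nth)
  have "R \<in> B ` set P" unfolding R_def using ip(1) by simp
  then obtain k where k: "k < n" "b k = R" unfolding b_def n_def by (auto simp: in_set_conv_nth)
  define S1 where "S1 = {s\<in>S. L \<le> A s \<and> B s \<le> R}"
  define S2 where "S2 = {s\<in>S. A s < L}"
  define S3 where "S3 = {s\<in>S. R < B s}"
  have "S \<subseteq> S1 \<union> S2 \<union> S3" unfolding S1_def S2_def S3_def by auto
  hence "card S \<le> card (S1 \<union> S2 \<union> S3)" using finS
    by (intro card_mono) (auto simp: S1_def S2_def S3_def)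
  also have "\<dots> \<le> card S1 + card S2 + card S3" by (meson card_Un_le le_trans add_right_mono)
  finally have c0: "card S \<le> card S1 + card S2 + card S3" .
  have meet: "\<And>s. s \<in> S \<Longrightarrow> B s \<ge> L \<and> A s \<le> R"
  proof -
    fix s assume s: "s \<in> S"
    obtain p where p: "p \<in> set P" "E p s" using Sadj[OF s] by blast
    have "p \<noteq> s" using Snot[OF s] p by auto
    hence "I p \<inter> I s \<noteq> {}" using adj p ip(3) SV s by auto
    then obtain x where "x \<in> I p" "x \<in> I s" by blast
    moreover have "I p = {A p..B p}" "I s = {A s..B s}" using AB[of p] AB[of s] p ip(3) SV s by auto
    ultimately show "B s \<ge> L \<and> A s \<le> R"
      using LP[OF p(1)] RP[OF p(1)] by auto
  qed
  have c2: "card S2 \<le> 1"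
  proof -
    have "\<forall>x\<in>S2. \<forall>y\<in>S2. x = y"
    proof (intro ballI, rule ccontr)
      fix x y assume xy: "x \<in> S2" "y \<in> S2" "x \<noteq> y"
      have "L \<in> I x" "L \<in> I y" using xy meet AB SV unfolding S2_def by auto
      thus False using disj xy unfolding S2_def by auto
    qed
    thus ?thesis using finS unfolding S2_def by (simp add: card_le_Suc0_iff_eq)
  qed
  have c3: "card S3 \<le> 1"
  proof -
    have "\<forall>x\<in>S3. \<forall>y\<in>S3. x = y"
    proof (intro ballI, rule ccontr)
      fix x y assume xy: "x \<in> S3" "y \<in> S3" "x \<noteq> y"
      have "R \<in> I x" "R \<in> I y" using xy meet AB SV unfolding S3_def by auto
      thus False using disj xy unfolding S3_def by auto
    qed
    thus ?thesis using finS unfolding S3_def by (simp add: card_le_Suc0_iff_eq)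
  qed
  have injh: "inj_on h S1"
  proof (rule inj_onI)
    fix x y assume xy: "x \<in> S1" "y \<in> S1" "h x = h y"
    show "x = y"
    proof (rule ccontr)
      assume "x \<noteq> y"
      moreover have "x \<in> V" "y \<in> V" using xy SV unfolding S1_def by auto
      hence "h x \<in> I x" "h x \<in> I y" using xy(3) hin by metis+
      ultimately show False using disj xy unfolding S1_def by auto
    qed
  qed
  have sub: "h ` S1 \<subseteq> h ` set P"
  proof
    fix z assume "z \<in> h ` S1"
    then obtain s where s: "s \<in> S1" "z = h s" by blast
    have sV: "s \<in> V" using s SV unfolding S1_def by auto
    have "L \<le> z" "z \<le> R" using hin[OF sV] AB[OF sV] s unfolding S1_def by auto
    then obtain i where i: "i < n" "a i \<le> z" "z \<le> b i"
      using cover[of n a b j k z, OF cons j(1) k(1)] j k by auto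
    have "z \<in> H \<inter> I (P ! i)" using i AB[OF PiV[OF i(1)]] hin[OF sV] s
      unfolding a_def b_def by auto
    hence "z = h (P ! i)" using h[OF PiV[OF i(1)]] by auto
    thus "z \<in> h ` set P" using i(1) n_def by auto
  qed
  have "card S1 = card (h ` S1)" using injh by (simp add: card_image)
  also have "\<dots> \<le> card (h ` set P)" using sub by (simp add: card_mono)
  also have "\<dots> \<le> card (set P)" by (rule card_image_le) simp
  also have "\<dots> \<le> length P" by (rule card_length)
  finally have "card S1 \<le> length P" .
  thus False using c0 c2 c3 assms(6) by linarith
qed

end
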